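(* Let $(M,d)$ be a bounded metric space with metric normal structure such that $\mathcal A(M)$ is compact. Let $\mathcal F$ be a family of interlaced orbit-nonexpansive self-mappings of $M$. Then there exists a point $x\in M$ with $Tx=x$ for all $T\in\mathcal F$. Moreover, the common fixed point set $\mathrm{Fix}(\mathcal F)=\{x\in M: Tx=x\ \forall T\in\mathcal F\}$ is a one-local retract of $M$.
   Context: For a metric space $(M,d)$, a mapping $T:M\to M$ and $x\in M$, the orbit of $x$ is $o_T(x)=\{x\}\cup\{T^nx:n\in\mathbb N\}$. For $x\in M$ and bounded $A\subseteq M$, $D(x,A)=\sup\{d(x,a):a\in A\}$ and $\delta(A)=\sup\{d(x,y):x,y\in A\}$. A family $\mathcal F$ of self-mappings of a bounded metric space $M$ is a family of interlaced orbit-nonexpansive mappings if $d(Tx,Sy)\le\sup\{D(x,o_R(y)):R\in\mathcal F\}$ for all $T,S\in\mathcal F$ and $x,y\in M$. A subset of $M$ is admissible if it is an intersection of closed balls of $M$; $\mathcal A(M)$ denotes the family of admissible sets. $\mathcal A(M)$ is compact if every subfamily of $\mathcal A(M)$ all of whose finite intersections are nonempty has nonempty intersection. $(M,d)$ has metric normal structure if for every admissible set $A$ with more than one point there exists $z_A\in A$ with $D(z_A,A)<\delta(A)$. A subset $E\subseteq M$ is a one-local retract of $M$ if for every family of closed balls with centers in $E$ having nonempty intersection, that intersection meets $E$. *)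

theory Defs
  imports "HOL-Analysis.Analysis"
begin

definition bounded_metric :: "'a set \<Rightarrow> ('a \<Rightarrow> 'a \<Rightarrow> real) \<Rightarrow> bool" where
  "bounded_metric M d \<longleftrightarrow> (\<exists>B. \<forall>x\<in>M. \<forall>y\<in>M. d x y \<le> B)"

definition orbit :: "('a \<Rightarrow> 'a) \<Rightarrow> 'a \<Rightarrow> 'a set" where
  "orbit T x = insert x {(T ^^ n) x | n. n \<ge> 1}"

definition Dpt :: "('a \<Rightarrow> 'a \<Rightarrow> real) \<Rightarrow> 'a \<Rightarrow> 'a set \<Rightarrow> real" where
  "Dpt d x A = Sup {d x a | a. a \<in> A}"

definition diam_d :: "('a \<Rightarrow> 'a \<Rightarrow> real) \<Rightarrow> 'a set \<Rightarrow> real" where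
  "diam_d d A = Sup {d x y | x y. x \<in> A \<and> y \<in> A}"

definition self_maps :: "'a set \<Rightarrow> ('a \<Rightarrow> 'a) set \<Rightarrow> bool" where
  "self_maps M F \<longleftrightarrow> (\<forall>T\<in>F. \<forall>x\<in>M. T x \<in> M)"

definition interlaced_orbit_nonexpansive ::
  "'a set \<Rightarrow> ('a \<Rightarrow> 'a \<Rightarrow> real) \<Rightarrow> ('a \<Rightarrow> 'a) set \<Rightarrow> bool" where
  "interlaced_orbit_nonexpansive M d F \<longleftrightarrow> self_maps M F \<and>
     (\<forall>T\<in>F. \<forall>S\<in>F. \<forall>x\<in>M. \<forall>y\<in>M.
        d (T x) (S y) \<le> Sup {Dpt d x (orbit R y) | R. R \<in> F})"

definition closed_balls :: "'a set \<Rightarrow> ('a \<Rightarrow> 'a \<Rightarrow> real) \<Rightarrow> 'a set set" where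
  "closed_balls M d = {Metric_space.mcball M d c r | c r. c \<in> M \<and> r \<ge> 0}"

text \<open>admissible: intersection of closed balls of M (the empty intersection is M)\<close>
definition admissible :: "'a set \<Rightarrow> ('a \<Rightarrow> 'a \<Rightarrow> real) \<Rightarrow> 'a set \<Rightarrow> bool" where
  "admissible M d A \<longleftrightarrow> (\<exists>\<B>. \<B> \<subseteq> closed_balls M d \<and> A = M \<inter> \<Inter>\<B>)"

definition admissible_compact :: "'a set \<Rightarrow> ('a \<Rightarrow> 'a \<Rightarrow> real) \<Rightarrow> bool" where
  "admissible_compact M d \<longleftrightarrow>
     (\<forall>\<C>. \<C> \<subseteq> Collect (admissible M d) \<longrightarrow>
        (\<forall>\<G>. \<G> \<subseteq> \<C> \<and> finite \<G> \<and> \<G> \<noteq> {} \<longrightarrow> \<Inter>\<G> \<noteq> {}) \<longrightarrow>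
        M \<inter> \<Inter>\<C> \<noteq> {})"

definition metric_normal_structure :: "'a set \<Rightarrow> ('a \<Rightarrow> 'a \<Rightarrow> real) \<Rightarrow> bool" where
  "metric_normal_structure M d \<longleftrightarrow>
     (\<forall>A. admissible M d A \<and> (\<exists>x\<in>A. \<exists>y\<in>A. x \<noteq> y) \<longrightarrow>
        (\<exists>z\<in>A. Dpt d z A < diam_d d A))"

definition one_local_retract :: "'a set \<Rightarrow> ('a \<Rightarrow> 'a \<Rightarrow> real) \<Rightarrow> 'a set \<Rightarrow> bool" where
  "one_local_retract M d E \<longleftrightarrow> E \<subseteq> M \<and>
     (\<forall>P :: ('a \<times> real) set. (\<forall>(c,r)\<in>P. c \<in> E \<and> r \<ge> 0) \<longrightarrow>
        M \<inter> (\<Inter>(c,r)\<in>P. Metric_space.mcball M d c r) \<noteq> {} \<longrightarrow>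
        M \<inter> (\<Inter>(c,r)\<in>P. Metric_space.mcball M d c r) \<inter> E \<noteq> {})"

definition common_fixed_points :: "'a set \<Rightarrow> ('a \<Rightarrow> 'a) set \<Rightarrow> 'a set" where
  "common_fixed_points M F = {x\<in>M. \<forall>T\<in>F. T x = x}"

end

theory Submission
  imports Defs
begin

lemma adm_subset: "admissible M d A \<Longrightarrow> A \<subseteq> M"
  unfolding admissible_def by auto

lemma adm_Inter:
  assumes "\<C> \<subseteq> Collect (admissible M d)"
  shows "admissible M d (M \<inter> \<Inter>\<C>)"
proof -
  define \<B> where "\<B> = {b\<in>closed_balls M d. \<exists>A\<in>\<C>. A \<subseteq> b}"
  have eq: "M \<inter> \<Inter>\<C> = M \<inter> \<Inter>\<B>"
  proof (rule equalityI; rule subsetI)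
    fix x assume x: "x \<in> M \<inter> \<Inter>\<C>"
    have "x \<in> b" if b: "b \<in> \<B>" for b
    proof -
      from b obtain A where "A \<in> \<C>" "A \<subseteq> b" unfolding \<B>_def by blast
      then show ?thesis using x by blast
    qed
    then show "x \<in> M \<inter> \<Inter>\<B>" using x by blast
  next
    fix x assume x: "x \<in> M \<inter> \<Inter>\<B>"
    have "x \<in> A" if A: "A \<in> \<C>" for A
    proof -
      from A assms obtain \<B>' where B': "\<B>' \<subseteq> closed_balls M d" "A = M \<inter> \<Inter>\<B>'"
        unfolding admissible_def by blast
      have "A \<subseteq> b" if "b \<in> \<B>'" for b using that unfolding B'(2) by blast
      then have "\<B>' \<subseteq> \<B>" unfolding \<B>_def using B'(1) A by blast
      then show ?thesis unfolding B'(2) using x by blast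
    qed
    then show "x \<in> M \<inter> \<Inter>\<C>" using x by blast
  qed
  moreover have "\<B> \<subseteq> closed_balls M d" unfolding \<B>_def by blast
  ultimately show ?thesis unfolding admissible_def by (intro exI[of _ \<B>] conjI)
qed

lemma adm_ball:
  assumes ms: "Metric_space M d" and "c \<in> M" "r \<ge> 0"
  shows "admissible M d (Metric_space.mcball M d c r)"
proof -
  have "Metric_space.mcball M d c r \<in> closed_balls M d"
    unfolding closed_balls_def using assms by blast
  moreover have "Metric_space.mcball M d c r \<subseteq> M"
    by (auto simp: Metric_space.mcball_def[OF ms])
  ultimately show ?thesis unfolding admissible_def
    by (intro exI[of _ "{Metric_space.mcball M d c r}"]) auto
qed

lemma orbit_sub:
  assumes "\<forall>x\<in>K. R x \<in> K" "y \<in> K"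
  shows "orbit R y \<subseteq> K"
proof -
  have "(R ^^ n) y \<in> K" for n
  proof (induction n)
    case 0 then show ?case using assms(2) by simp
  next
    case (Suc n) then show ?case using assms(1) by simp
  qed
  then show ?thesis unfolding orbit_def using assms(2) by blast
qed

lemma core:
  fixes M :: "'a set" and d :: "'a \<Rightarrow> 'a \<Rightarrow> real" and F :: "('a \<Rightarrow> 'a) set"
  assumes ms: "Metric_space M d"
    and bd: "bounded_metric M d"
    and ns: "metric_normal_structure M d"
    and ac: "admissible_compact M d"
    and io: "interlaced_orbit_nonexpansive M d F"
    and A0: "admissible M d A0" "A0 \<noteq> {}" "\<forall>T\<in>F. \<forall>x\<in>A0. T x \<in> A0"
  shows "\<exists>x\<in>A0. \<forall>T\<in>F. T x = x"
proof (cases "F = {}")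
  case True then show ?thesis using A0 by auto
next
  case Fne: False
  have sm: "\<forall>T\<in>F. \<forall>x\<in>M. T x \<in> M"
    using io unfolding interlaced_orbit_nonexpansive_def self_maps_def by blast
  have ionx: "\<And>T S x y. T \<in> F \<Longrightarrow> S \<in> F \<Longrightarrow> x \<in> M \<Longrightarrow> y \<in> M \<Longrightarrow>
      d (T x) (S y) \<le> Sup {Dpt d x (orbit R y) | R. R \<in> F}"
    using io unfolding interlaced_orbit_nonexpansive_def by blast
  define \<K> where "\<K> = {K. admissible M d K \<and> K \<noteq> {} \<and> K \<subseteq> A0 \<and> (\<forall>T\<in>F. \<forall>x\<in>K. T x \<in> K)}"
  have A0K: "A0 \<in> \<K>" using A0 unfolding \<K>_def by auto
  have "\<exists>m \<in> \<K>. \<forall>a \<in> \<K>. (\<lambda>a b. b \<subseteq> a) m a \<longrightarrow> a = m"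
  proof (rule predicate_Zorn)
    show "partial_order_on \<K> (relation_of (\<lambda>a b. b \<subseteq> a) \<K>)"
      by (rule partial_order_on_relation_ofI) auto
  next
    fix C assume C: "C \<in> Chains (relation_of (\<lambda>a b. b \<subseteq> a) \<K>)"
    then have CK: "C \<subseteq> \<K>" by (rule Chains_relation_of)
    have ch: "\<forall>a\<in>C. \<forall>b\<in>C. a \<subseteq> b \<or> b \<subseteq> a"
      using C unfolding Chains_def relation_of_def by auto
    show "\<exists>u\<in>\<K>. \<forall>a\<in>C. u \<subseteq> a"
    proof (cases "C = {}")
      case True then show ?thesis using A0K by auto
    next
      case False
      let ?u = "M \<inter> \<Inter>C"
      have adm: "admissible M d ?u" using CK by (intro adm_Inter) (auto simp: \<K>_def)
      have "?u \<noteq> {}"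
        using ac unfolding admissible_compact_def
      proof (elim allE impE)
        show "C \<subseteq> Collect (admissible M d)" using CK by (auto simp: \<K>_def)
        show "\<forall>\<G>. \<G> \<subseteq> C \<and> finite \<G> \<and> \<G> \<noteq> {} \<longrightarrow> \<Inter> \<G> \<noteq> {}"
        proof (intro allI impI)
          fix \<G> assume G: "\<G> \<subseteq> C \<and> finite \<G> \<and> \<G> \<noteq> {}"
          have "subset.chain UNIV \<G>" using G ch by (auto simp: subset.chain_def)
          then have "\<Inter>\<G> \<in> \<G>" using G Inter_in_chain by blast
          then show "\<Inter>\<G> \<noteq> {}" using G CK by (auto simp: \<K>_def)
        qed
      qed
      moreover have "?u \<subseteq> A0" using False CK by (auto simp: \<K>_def)
      moreover have "\<forall>T\<in>F. \<forall>x\<in>?u. T x \<in> ?u"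
      proof -
        have "\<forall>a\<in>C. \<forall>T\<in>F. \<forall>x\<in>a. T x \<in> a" using CK unfolding \<K>_def by blast
        then show ?thesis using sm by blast
      qed
      ultimately show ?thesis using adm by (auto simp: \<K>_def)
    qed
  qed
  then obtain K where K: "K \<in> \<K>" and Kmin: "\<And>a. a \<in> \<K> \<Longrightarrow> a \<subseteq> K \<Longrightarrow> a = K" by auto

  have Kadm: "admissible M d K" and Kne: "K \<noteq> {}" and KA0: "K \<subseteq> A0"
    and Kinv: "\<forall>T\<in>F. \<forall>x\<in>K. T x \<in> K" using K by (auto simp: \<K>_def)
  have KM: "K \<subseteq> M" using Kadm by (rule adm_subset)
  have comm: "\<And>x y. x \<in> M \<Longrightarrow> y \<in> M \<Longrightarrow> d x y = d y x"
    using ms Metric_space.commute by metis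
  have d0: "\<And>x. x \<in> M \<Longrightarrow> d x x = 0"
    using ms Metric_space.mdist_zero by metis
  have ball: "\<And>c r x. Metric_space.mcball M d c r = {y. c \<in> M \<and> y \<in> M \<and> d c y \<le> r}"
    using Metric_space.mcball_def[OF ms] by metis
  obtain B where B: "\<And>x y. x \<in> M \<Longrightarrow> y \<in> M \<Longrightarrow> d x y \<le> B"
    using bd unfolding bounded_metric_def by auto
  have single: "\<forall>x\<in>K. \<forall>y\<in>K. x = y"
  proof (rule ccontr)
    assume "\<not> (\<forall>x\<in>K. \<forall>y\<in>K. x = y)"
    then have two: "\<exists>x\<in>K. \<exists>y\<in>K. x \<noteq> y" by blast
    obtain z where zK: "z \<in> K" and zlt: "Dpt d z K < diam_d d K"
      using ns two Kadm unfolding metric_normal_structure_def by blast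
    define r where "r = Dpt d z K"
    have hz: "d z y \<le> r" if "y \<in> K" for y
      unfolding r_def Dpt_def
      by (rule cSup_upper) (use that zK KM B in \<open>auto simp: bdd_above_def intro!: exI[of _ B]\<close>)
    have r0: "0 \<le> r" using hz[OF zK] d0 zK KM by auto
    define Kc where "Kc = M \<inter> \<Inter>({K} \<union> {Metric_space.mcball M d y r | y. y \<in> K})"
    have Kc_eq: "Kc = {x\<in>K. \<forall>y\<in>K. d y x \<le> r}"
      unfolding Kc_def ball using KM by auto
    have Kc_adm: "admissible M d Kc"
      unfolding Kc_def
    proof (rule adm_Inter)
      have "admissible M d (Metric_space.mcball M d y r)" if "y \<in> K" for y
        using adm_ball[OF ms _ r0] KM that by blast
      then show "{K} \<union> {Metric_space.mcball M d y r | y. y \<in> K} \<subseteq> Collect (admissible M d)"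
        using Kadm by blast
    qed
    have "\<forall>y\<in>K. d y z \<le> r" using hz comm KM zK by (metis subsetD)
    then have zKc: "z \<in> Kc" unfolding Kc_eq using zK by auto
    have key: "d (T x) (S y) \<le> r" if T: "T \<in> F" and S: "S \<in> F" and x: "x \<in> Kc" and y: "y \<in> K" for T S x y
    proof -
      have xK: "x \<in> K" and xr: "\<And>a. a \<in> K \<Longrightarrow> d a x \<le> r" using x unfolding Kc_eq by auto
      have "d (T x) (S y) \<le> Sup {Dpt d x (orbit R y) | R. R \<in> F}"
        using ionx T S xK KM y by blast
      also have "\<dots> \<le> r"
      proof (rule cSup_least)
        show "{Dpt d x (orbit R y) | R. R \<in> F} \<noteq> {}" using Fne by blast
        fix v assume "v \<in> {Dpt d x (orbit R y) | R. R \<in> F}"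
        then obtain R where R: "R \<in> F" and v: "v = Dpt d x (orbit R y)" by blast
        have oK: "orbit R y \<subseteq> K" by (rule orbit_sub) (use Kinv R y in auto)
        show "v \<le> r" unfolding v Dpt_def
        proof (rule cSup_least)
          show "{d x a |a. a \<in> orbit R y} \<noteq> {}" unfolding orbit_def by blast
          fix w assume "w \<in> {d x a |a. a \<in> orbit R y}"
          then obtain a where a: "a \<in> orbit R y" "w = d x a" by blast
          then have "a \<in> K" using oK by blast
          then show "w \<le> r" using a xr comm KM xK by (metis subsetD)
        qed
      qed
      finally show ?thesis .
    qed
    have Kc_inv: "\<forall>T\<in>F. \<forall>x\<in>Kc. T x \<in> Kc"
    proof (intro ballI)
      fix T x assume T: "T \<in> F" and x: "x \<in> Kc"
      have xK: "x \<in> K" using x unfolding Kc_eq by auto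
      have TxK: "T x \<in> K" using Kinv T xK by blast
      define K' where "K' = M \<inter> \<Inter>{K, Metric_space.mcball M d (T x) r}"
      have K'_eq: "K' = {y\<in>K. d (T x) y \<le> r}" unfolding K'_def ball using KM TxK by auto
      have K'adm: "admissible M d K'"
        unfolding K'_def
      proof (rule adm_Inter)
        have "admissible M d (Metric_space.mcball M d (T x) r)"
          using adm_ball[OF ms _ r0] KM TxK by blast
        then show "{K, Metric_space.mcball M d (T x) r} \<subseteq> Collect (admissible M d)"
          using Kadm by blast
      qed
      have img: "S y \<in> K'" if "S \<in> F" "y \<in> K" for S y
        using key[OF T that(1) x that(2)] Kinv that unfolding K'_eq by auto
      have "K' \<noteq> {}" using Fne Kne img by blast
      moreover have "\<forall>S\<in>F. \<forall>y\<in>K'. S y \<in> K'" using img unfolding K'_eq by auto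
      ultimately have "K' \<in> \<K>" using K'adm KA0 unfolding \<K>_def K'_eq by auto
      then have "K' = K" using Kmin unfolding K'_eq by auto
      then have "\<forall>y\<in>K. d (T x) y \<le> r" unfolding K'_eq by blast
      then have "\<forall>y\<in>K. d y (T x) \<le> r" using comm KM TxK by (metis subsetD)
      then show "T x \<in> Kc" unfolding Kc_eq using TxK by auto
    qed
    have "Kc \<in> \<K>" using Kc_adm zKc Kc_inv KA0 unfolding \<K>_def Kc_eq by auto
    then have KcK: "Kc = K" using Kmin unfolding Kc_eq by auto
    have "diam_d d K \<le> r" unfolding diam_d_def
    proof (rule cSup_least)
      show "{d x y |x y. x \<in> K \<and> y \<in> K} \<noteq> {}" using zK by blast
      fix v assume "v \<in> {d x y |x y. x \<in> K \<and> y \<in> K}"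
      then obtain x y where "x \<in> K" "y \<in> K" "v = d x y" by blast
      then show "v \<le> r" using KcK unfolding Kc_eq by auto
    qed
    then show False using zlt r_def by simp
  qed
  obtain p where pK: "p \<in> K" using Kne by blast
  then have "\<forall>T\<in>F. T p = p" using Kinv single by blast
  then show ?thesis using pK KA0 by blast
qed

theorem theorem3p3:
  fixes M :: "'a set" and d :: "'a \<Rightarrow> 'a \<Rightarrow> real" and F :: "('a \<Rightarrow> 'a) set"
  assumes "Metric_space M d"
    and "M \<noteq> {}"
    and "bounded_metric M d"
    and "metric_normal_structure M d"
    and "admissible_compact M d"
    and "interlaced_orbit_nonexpansive M d F"
  shows "(\<exists>x\<in>M. \<forall>T\<in>F. T x = x) \<and> one_local_retract M d (common_fixed_points M F)"
proof -
  note ms = assms(1)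
  have comm: "\<And>x y. x \<in> M \<Longrightarrow> y \<in> M \<Longrightarrow> d x y = d y x"
    using ms Metric_space.commute by metis
  have ball: "\<And>c r x. Metric_space.mcball M d c r = {y. c \<in> M \<and> y \<in> M \<and> d c y \<le> r}"
    using Metric_space.mcball_def[OF ms] by metis
  have sm: "\<forall>T\<in>F. \<forall>x\<in>M. T x \<in> M"
    using assms(6) unfolding interlaced_orbit_nonexpansive_def self_maps_def by blast
  have admM: "admissible M d M" unfolding admissible_def by (intro exI[of _ "{}"]) auto
  have part1: "\<exists>x\<in>M. \<forall>T\<in>F. T x = x"
    using core[OF assms(1) assms(3-6) admM assms(2) sm] .
  have "one_local_retract M d (common_fixed_points M F)"
    unfolding one_local_retract_def
  proof (intro conjI allI impI)
    show "common_fixed_points M F \<subseteq> M" unfolding common_fixed_points_def by auto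
    fix P :: "('a \<times> real) set"
    assume P: "\<forall>(c, r)\<in>P. c \<in> common_fixed_points M F \<and> 0 \<le> r"
      and ne: "M \<inter> (\<Inter>(c, r)\<in>P. Metric_space.mcball M d c r) \<noteq> {}"
    define I where "I = M \<inter> (\<Inter>(c, r)\<in>P. Metric_space.mcball M d c r)"
    have Iadm: "admissible M d I" unfolding I_def
    proof (rule adm_Inter)
      show "(\<lambda>(c, r). Metric_space.mcball M d c r) ` P \<subseteq> Collect (admissible M d)"
        using P adm_ball[OF ms] by (auto simp: common_fixed_points_def)
    qed
    have Iinv: "\<forall>T\<in>F. \<forall>x\<in>I. T x \<in> I"
    proof (intro ballI)
      fix T x assume T: "T \<in> F" and x: "x \<in> I"
      have xM: "x \<in> M" using x I_def by auto
      have "T x \<in> Metric_space.mcball M d c r" if cr: "(c, r) \<in> P" for c r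
      proof -
        have cM: "c \<in> M" and cfix: "\<forall>R\<in>F. R c = c" and xr: "d c x \<le> r"
          using P cr x unfolding I_def common_fixed_points_def ball by auto
        have orb: "orbit R c = {c}" if "R \<in> F" for R
        proof -
          have "(R ^^ n) c = c" for n by (induction n) (use cfix that in auto)
          then show ?thesis unfolding orbit_def by auto
        qed
        have h1: "d (T x) (T c) \<le> Sup {Dpt d x (orbit R c) | R. R \<in> F}"
          using assms(6) T xM cM unfolding interlaced_orbit_nonexpansive_def by blast
        have Dc: "Dpt d x (orbit R c) = d x c" if "R \<in> F" for R
          using orb[OF that] unfolding Dpt_def by simp
        have h2: "{Dpt d x (orbit R c) | R. R \<in> F} = {d x c}"
        proof
          show "{Dpt d x (orbit R c) | R. R \<in> F} \<subseteq> {d x c}" using Dc by auto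
          show "{d x c} \<subseteq> {Dpt d x (orbit R c) | R. R \<in> F}" using Dc[OF T, symmetric] T by blast
        qed
        have h3: "Sup {Dpt d x (orbit R c) | R. R \<in> F} = d x c" unfolding h2 by simp
        have "T c = c" using cfix T by blast
        then have "d (T x) c \<le> d x c" using h1 h3 by simp
        then show ?thesis using xr comm cM xM sm T unfolding ball by auto
      qed
      then show "T x \<in> I" using sm T xM unfolding I_def by auto
    qed
    obtain p where "p \<in> I" "\<forall>T\<in>F. T p = p"
      using core[OF assms(1) assms(3-6) Iadm ne[folded I_def] Iinv] by blast
    then show "M \<inter> (\<Inter>(c, r)\<in>P. Metric_space.mcball M d c r) \<inter> common_fixed_points M F \<noteq> {}"
      unfolding I_def common_fixed_points_def by blast
  qed
  with part1 show ?thesis by blast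
qed

end
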